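(* Let $F$ be a field of characteristic $\neq 2,3$, $C$ a Cayley–Dickson algebra over $F$ and $\gamma_1,\gamma_2,\gamma_3 \in F\setminus\{0\}$. Then the Jordan algebra $H(C_3,*_\gamma)$ has no nonzero derivation $d$ such that every value $d(x)$ is invertible or zero; i.e. $H(C_3,*_\gamma)$ admits no derivation with invertible values.
   Context: $C$ carries its standard involution $c\mapsto \bar c$, with norm $n$ and trace $t$. $C_3$ is the algebra of $3\times3$ matrices over $C$; for $X\in C_3$, $\bar X^T$ denotes the matrix obtained by transposing and applying $\bar{\ }$ to every entry. With $\gamma = \mathrm{diag}(\gamma_1,\gamma_2,\gamma_3)$, the involution $*_\gamma$ is $X^{*_\gamma} = \gamma^{-1}\bar X^T\gamma$, and $H(C_3,*_\gamma)=\{X: X^{*_\gamma}=X\}$ with product $X\circ Y = \tfrac12(XY+YX)$, a simple exceptional Jordan algebra. An element $x$ of a unital Jordan algebra $J$ is invertible if there exists $y\in J$ with $xy=1$, $x^2y=x$. A derivation with invertible values of $J$ is a nonzero derivation $d$ of $J$ such that for every $x \in J$, $d(x)$ is either invertible or equal to $0$. *)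

theory Defs
  imports Main "HOL-Library.Numeral_Type"
begin

record ('a, 'b) cdalg =
  cadd  :: "'b \<Rightarrow> 'b \<Rightarrow> 'b"
  cneg  :: "'b \<Rightarrow> 'b"
  czero :: 'b
  cone  :: 'b
  cmul  :: "'b \<Rightarrow> 'b \<Rightarrow> 'b"
  cconj :: "'b \<Rightarrow> 'b"
  csmul :: "'a \<Rightarrow> 'b \<Rightarrow> 'b"

definition cd_base :: "('a::field, 'a) cdalg" where
  "cd_base = \<lparr> cadd = (+), cneg = uminus, czero = 0, cone = 1, cmul = (*),
              cconj = id, csmul = (*) \<rparr>"

text \<open>Cayley--Dickson doubling with parameter mu:
  (a,b)(c,d) = (ac + mu conj(d) b, da + b conj(c)),  conj(a,b) = (conj a, -b).\<close>
definition cd_double :: "'a \<Rightarrow> ('a, 'b) cdalg \<Rightarrow> ('a, 'b \<times> 'b) cdalg" where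
  "cd_double mu A = \<lparr>
     cadd = (\<lambda>(a,b) (c,d). (cadd A a c, cadd A b d)),
     cneg = (\<lambda>(a,b). (cneg A a, cneg A b)),
     czero = (czero A, czero A),
     cone = (cone A, czero A),
     cmul = (\<lambda>(a,b) (c,d). (cadd A (cmul A a c) (csmul A mu (cmul A (cconj A d) b)),
                            cadd A (cmul A d a) (cmul A b (cconj A c)))),
     cconj = (\<lambda>(a,b). (cconj A a, cneg A b)),
     csmul = (\<lambda>k (a,b). (csmul A k a, csmul A k b)) \<rparr>"

type_synonym 'a octo = "(('a \<times> 'a) \<times> ('a \<times> 'a)) \<times> (('a \<times> 'a) \<times> ('a \<times> 'a))"

definition cayley_dickson :: "'a::field \<Rightarrow> 'a \<Rightarrow> 'a \<Rightarrow> ('a, 'a octo) cdalg" where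
  "cayley_dickson mu1 mu2 mu3 = cd_double mu3 (cd_double mu2 (cd_double mu1 cd_base))"

type_synonym 'b mat3 = "3 \<Rightarrow> 3 \<Rightarrow> 'b"

definition madd :: "('a,'b) cdalg \<Rightarrow> 'b mat3 \<Rightarrow> 'b mat3 \<Rightarrow> 'b mat3" where
  "madd A X Y = (\<lambda>i j. cadd A (X i j) (Y i j))"

definition msmul :: "('a,'b) cdalg \<Rightarrow> 'a \<Rightarrow> 'b mat3 \<Rightarrow> 'b mat3" where
  "msmul A k X = (\<lambda>i j. csmul A k (X i j))"

definition mzero :: "('a,'b) cdalg \<Rightarrow> 'b mat3" where
  "mzero A = (\<lambda>i j. czero A)"

definition mone :: "('a,'b) cdalg \<Rightarrow> 'b mat3" where
  "mone A = (\<lambda>i j. if i = j then cone A else czero A)"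

definition mmul :: "('a,'b) cdalg \<Rightarrow> 'b mat3 \<Rightarrow> 'b mat3 \<Rightarrow> 'b mat3" where
  "mmul A X Y = (\<lambda>i j. cadd A (cadd A (cmul A (X i 0) (Y 0 j)) (cmul A (X i 1) (Y 1 j)))
                              (cmul A (X i 2) (Y 2 j)))"

definition mconjT :: "('a,'b) cdalg \<Rightarrow> 'b mat3 \<Rightarrow> 'b mat3" where
  "mconjT A X = (\<lambda>i j. cconj A (X j i))"

definition mdiag :: "('a,'b) cdalg \<Rightarrow> (3 \<Rightarrow> 'a) \<Rightarrow> 'b mat3" where
  "mdiag A g = (\<lambda>i j. if i = j then csmul A (g i) (cone A) else czero A)"

definition mstar :: "('a::field,'b) cdalg \<Rightarrow> (3 \<Rightarrow> 'a) \<Rightarrow> 'b mat3 \<Rightarrow> 'b mat3" where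
  "mstar A g X = mmul A (mmul A (mdiag A (\<lambda>i. inverse (g i))) (mconjT A X)) (mdiag A g)"

definition Hset :: "('a::field,'b) cdalg \<Rightarrow> (3 \<Rightarrow> 'a) \<Rightarrow> 'b mat3 set" where
  "Hset A g = {X. mstar A g X = X}"

definition jprod :: "('a::field,'b) cdalg \<Rightarrow> 'b mat3 \<Rightarrow> 'b mat3 \<Rightarrow> 'b mat3" where
  "jprod A X Y = msmul A (inverse 2) (madd A (mmul A X Y) (mmul A Y X))"

definition jinvertible :: "('a::field,'b) cdalg \<Rightarrow> (3 \<Rightarrow> 'a) \<Rightarrow> 'b mat3 \<Rightarrow> bool" where
  "jinvertible A g x \<longleftrightarrow>
     (\<exists>y \<in> Hset A g. jprod A x y = mone A \<and> jprod A (jprod A x x) y = x)"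

text \<open>An F-linear derivation of the Jordan algebra H(C_3,*_gamma)
  (only its values on H matter).\<close>
definition is_derivation :: "('a::field,'b) cdalg \<Rightarrow> (3 \<Rightarrow> 'a) \<Rightarrow> ('b mat3 \<Rightarrow> 'b mat3) \<Rightarrow> bool" where
  "is_derivation A g d \<longleftrightarrow>
     (\<forall>X \<in> Hset A g. d X \<in> Hset A g) \<and>
     (\<forall>X \<in> Hset A g. \<forall>Y \<in> Hset A g. d (madd A X Y) = madd A (d X) (d Y)) \<and>
     (\<forall>k. \<forall>X \<in> Hset A g. d (msmul A k X) = msmul A k (d X)) \<and>
     (\<forall>X \<in> Hset A g. \<forall>Y \<in> Hset A g.
         d (jprod A X Y) = madd A (jprod A (d X) Y) (jprod A X (d Y)))"

definition deriv_inv_values :: "('a::field,'b) cdalg \<Rightarrow> (3 \<Rightarrow> 'a) \<Rightarrow> ('b mat3 \<Rightarrow> 'b mat3) \<Rightarrow> bool" where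
  "deriv_inv_values A g d \<longleftrightarrow>
     is_derivation A g d \<and> (\<exists>X \<in> Hset A g. d X \<noteq> mzero A) \<and>
     (\<forall>X \<in> Hset A g. d X = mzero A \<or> jinvertible A g (d X))"

end

theory Submission
  imports Defs
begin

lemma ex3: fixes x :: 3 shows "x = 0 \<or> x = 1 \<or> x = 2"
proof (induct x)
  case (of_int z)
  then have "z = 0 \<or> z = 1 \<or> z = 2" by fastforce
  then show ?case by auto
qed

lemmas cdsimps = cayley_dickson_def cd_double_def cd_base_def split_beta prod_eq_iff

definition Em :: "('a,'b) cdalg \<Rightarrow> 3 \<Rightarrow> 'b mat3" where
  "Em A k = (\<lambda>i j. if i = k \<and> j = k then cone A else czero A)"

definition shape :: "('a,'b) cdalg \<Rightarrow> 3 \<Rightarrow> 'b mat3 \<Rightarrow> bool" where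
  "shape A k Z \<longleftrightarrow> (\<forall>i j. (i = k \<longleftrightarrow> j = k) \<longrightarrow> Z i j = czero A)"

definition Off :: "('a,'b) cdalg \<Rightarrow> 'b mat3 \<Rightarrow> 3 \<Rightarrow> 3 \<Rightarrow> 'b mat3" where
  "Off A X l m = (\<lambda>i j. if (i = l \<and> j = m) \<or> (i = m \<and> j = l) then X i j else czero A)"

context fixes m1 m2 m3 :: "'a::field" begin
abbreviation "C \<equiv> cayley_dickson m1 m2 m3"

lemma mul_sone_l[simp]: "cmul C (csmul C k (cone C)) a = csmul C k a" by (simp add: cdsimps)
lemma mul_sone_r[simp]: "cmul C a (csmul C k (cone C)) = csmul C k a" by (simp add: cdsimps)
lemma mul_one_l[simp]: "cmul C (cone C) a = a" by (simp add: cdsimps)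
lemma mul_one_r[simp]: "cmul C a (cone C) = a" by (simp add: cdsimps)
lemma mul_zero_l[simp]: "cmul C (czero C) a = czero C" by (simp add: cdsimps)
lemma mul_zero_r[simp]: "cmul C a (czero C) = czero C" by (simp add: cdsimps)
lemma add_zero_l[simp]: "cadd C (czero C) a = a" by (simp add: cdsimps)
lemma add_zero_r[simp]: "cadd C a (czero C) = a" by (simp add: cdsimps)
lemma smul_smul[simp]: "csmul C k (csmul C l a) = csmul C (k*l) a" by (simp add: cdsimps)
lemma smul_zero[simp]: "csmul C k (czero C) = czero C" by (simp add: cdsimps)
lemma smul_one[simp]: "csmul C 1 a = a" by (simp add: cdsimps)
lemma conj_one[simp]: "cconj C (cone C) = cone C" by (simp add: cdsimps)
lemma conj_zero[simp]: "cconj C (czero C) = czero C" by (simp add: cdsimps)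
lemma conj_add: "cconj C (cadd C a b) = cadd C (cconj C a) (cconj C b)" by (simp add: cdsimps)
lemma conj_smul: "cconj C (csmul C k a) = csmul C k (cconj C a)" by (simp add: cdsimps)
lemma conj_conj[simp]: "cconj C (cconj C a) = a" by (simp add: cdsimps)
lemma smul_add: "csmul C k (cadd C a b) = cadd C (csmul C k a) (csmul C k b)" by (simp add: cdsimps algebra_simps)
lemma add_comm: "cadd C a b = cadd C b a" by (simp add: cdsimps algebra_simps)
lemma add_assoc: "cadd C (cadd C a b) c = cadd C a (cadd C b c)" by (simp add: cdsimps algebra_simps)
lemma add_lcomm: "cadd C a (cadd C b c) = cadd C b (cadd C a c)" by (simp add: cdsimps algebra_simps)

lemma all3: "(\<forall>i::3. P i) \<longleftrightarrow> P 0 \<and> P 1 \<and> P 2" by (metis ex3)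

lemma mat_eq: "(X::'b mat3) = Y \<longleftrightarrow> (\<forall>i j. X i j = Y i j)" by (auto simp: fun_eq_iff)

lemma mstar_eq: "mstar C g X = (\<lambda>i j. csmul C (g j * inverse (g i)) (cconj C (X j i)))"
  unfolding mat_eq all3 by (simp add: mstar_def mmul_def mdiag_def mconjT_def)

lemma H_char: "X \<in> Hset C g \<longleftrightarrow> (\<forall>i j. X i j = csmul C (g j * inverse (g i)) (cconj C (X j i)))"
  unfolding Hset_def mem_Collect_eq mstar_eq fun_eq_iff by (rule iffI; metis)


definition re :: "'a octo \<Rightarrow> 'a" where "re a = fst (fst (fst a))"

lemma re_add[simp]: "re (cadd C a b) = re a + re b" by (simp add: cdsimps re_def)
lemma re_smul[simp]: "re (csmul C k a) = k * re a" by (simp add: cdsimps re_def)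
lemma re_one[simp]: "re (cone C) = 1" by (simp add: cdsimps re_def)
lemma re_zero[simp]: "re (czero C) = 0" by (simp add: cdsimps re_def)
lemma re_comm: "re (cmul C a b) = re (cmul C b a)" by (simp add: cdsimps re_def algebra_simps)

lemma neg_self: "(2::'a) \<noteq> 0 \<Longrightarrow> ((x::'a) = - x) \<longleftrightarrow> x = 0"
proof
  assume h: "(2::'a) \<noteq> 0" and e: "x = - x"
  have "x + x = x + (- x)" using e by (rule arg_cong[where f="\<lambda>t. x + t"])
  hence "x + x = 0" by (simp only: add.right_inverse)
  hence "2 * x = 0" by (simp only: mult_2)
  thus "x = 0" using h by (simp only: mult_eq_0_iff) blast
qed simp

lemma conj_fix: assumes "(2::'a) \<noteq> 0" "cconj C a = a" shows "a = csmul C (re a) (cone C)"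
  using assms by (simp add: cdsimps re_def neg_self)

lemma half_scalar: "(2::'a) \<noteq> 0 \<Longrightarrow> inverse 2 * (x + x) = (x::'a)"
proof -
  assume h: "(2::'a) \<noteq> 0"
  have "inverse 2 * (x + x) = inverse 2 * (2 * x)" by (simp only: mult_2)
  also have "\<dots> = (inverse 2 * 2) * x" by (simp only: mult.assoc)
  also have "\<dots> = x" using h by simp
  finally show ?thesis .
qed

lemma half_double: assumes "(2::'a) \<noteq> 0" "a = cadd C b b" shows "b = csmul C (inverse 2) a"
  using assms by (simp add: cdsimps half_scalar)

lemma smul_cancel: "k \<noteq> 0 \<Longrightarrow> csmul C k a = csmul C k b \<longleftrightarrow> a = b"
  by (simp add: cdsimps)

lemma two_neq_one: "(2::'a) \<noteq> 1"
  by (metis one_add_one add_cancel_left_left zero_neq_one)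

lemma add_self: "cadd C a a = a \<longleftrightarrow> a = czero C"
  by (simp add: cdsimps two_neq_one)


lemma scal: "c + a = (2::'a) \<Longrightarrow> d + b = 2 \<Longrightarrow> a + b + (c + d) = 2 \<Longrightarrow> (2::'a) = 0"
proof -
  assume h: "c + a = (2::'a)" "d + b = 2" "a + b + (c + d) = 2"
  have eq: "a + b + (c + d) = (c + a) + (d + b)" by (simp add: add_ac)
  have "(c + a) + (d + b) = 2" using h(3) by (simp only: eq)
  hence "2 + 2 = (2::'a)" by (simp only: h(1) h(2))
  thus ?thesis by (simp only: add_cancel_left_left)
qed

lemma smul_eq_zero: "k \<noteq> 0 \<Longrightarrow> csmul C k a = czero C \<longleftrightarrow> a = czero C"
  by (metis smul_cancel smul_zero)
lemma smul_eq_zero': "k \<noteq> 0 \<Longrightarrow> czero C = csmul C k a \<longleftrightarrow> a = czero C"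
  by (metis smul_cancel smul_zero)

lemma peirce_iff: assumes "(2::'a) \<noteq> 0"
  shows "jprod C (Em C k) Z = msmul C (inverse 2) Z \<longleftrightarrow> shape C k Z"
  using ex3[of k] assms
  apply (elim disjE)
  apply (simp_all only: mat_eq all3 shape_def)
  apply (simp_all add: jprod_def msmul_def madd_def mmul_def Em_def smul_cancel add_self smul_eq_zero smul_eq_zero')
  done

lemma jprod_comm: "jprod C X Y = jprod C Y X"
  by (simp add: jprod_def madd_def add_comm)

lemma double_mat: assumes "(2::'a) \<noteq> 0" "Z = madd C W W" shows "W = msmul C (inverse 2) Z"
  using assms half_double by (simp add: mat_eq madd_def msmul_def)

lemma noninv: assumes "shape C k Z" "jprod C Z y = mone C" shows False
proof -
  have e: "\<And>i. re (jprod C Z y i i) = 1" using assms(2) by (simp add: mone_def)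
  show False
    using ex3[of k] assms(1)
  proof (elim disjE)
    assume "k = 0" "shape C k Z"
    hence z: "Z 0 0 = czero C" "Z 1 1 = czero C" "Z 2 2 = czero C" "Z 1 2 = czero C" "Z 2 1 = czero C"
      by (simp_all add: shape_def)
    show False using e[of 0] e[of 1] e[of 2]
      apply (simp add: jprod_def msmul_def madd_def mmul_def z re_comm)
      apply (elim conjE)
      apply (erule notE)
      apply (erule (2) scal)
      done
  next
    assume "k = 1" "shape C k Z"
    hence z: "Z 0 0 = czero C" "Z 1 1 = czero C" "Z 2 2 = czero C" "Z 0 2 = czero C" "Z 2 0 = czero C"
      by (simp_all add: shape_def)
    show False using e[of 0] e[of 1] e[of 2]
      apply (simp add: jprod_def msmul_def madd_def mmul_def z re_comm)
      apply (elim conjE)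
      apply (erule notE)
      apply (erule (2) scal)
      done
  next
    assume "k = 2" "shape C k Z"
    hence z: "Z 0 0 = czero C" "Z 1 1 = czero C" "Z 2 2 = czero C" "Z 0 1 = czero C" "Z 1 0 = czero C"
      by (simp_all add: shape_def)
    show False using e[of 0] e[of 1] e[of 2]
      apply (simp add: jprod_def msmul_def madd_def mmul_def z re_comm)
      apply (elim conjE)
      apply (erule notE)
      apply (erule (2) scal)
      done
  qed
qed

lemma half_add: "(2::'a) \<noteq> 0 \<Longrightarrow> csmul C (inverse 2) (cadd C a a) = a"
  using half_double by metis

lemma madd_H: assumes "X \<in> Hset C g" "Y \<in> Hset C g" shows "madd C X Y \<in> Hset C g"
  unfolding H_char
proof (intro allI)
  fix i j
  have x: "X i j = csmul C (g j * inverse (g i)) (cconj C (X j i))" using assms(1) unfolding H_char by blast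
  have y: "Y i j = csmul C (g j * inverse (g i)) (cconj C (Y j i))" using assms(2) unfolding H_char by blast
  show "madd C X Y i j = csmul C (g j * inverse (g i)) (cconj C (madd C X Y j i))"
    unfolding madd_def by (subst x, subst y) (simp add: conj_add smul_add)
qed

lemma msmul_H: assumes "X \<in> Hset C g" shows "msmul C r X \<in> Hset C g"
  unfolding H_char
proof (intro allI)
  fix i j
  have x: "X i j = csmul C (g j * inverse (g i)) (cconj C (X j i))" using assms(1) unfolding H_char by blast
  show "msmul C r X i j = csmul C (g j * inverse (g i)) (cconj C (msmul C r X j i))"
    unfolding msmul_def by (subst x) (simp add: conj_smul mult_ac)
qed

lemma Em_H: assumes "\<forall>i. g i \<noteq> 0" shows "Em C k \<in> Hset C g"
  using assms by (auto simp: H_char Em_def)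

lemma half_one: "(2::'a) \<noteq> 0 \<Longrightarrow> csmul C (1/2) (cadd C (cone C) (cone C)) = cone C"
  by (metis half_add inverse_eq_divide)

lemma Em_idem: assumes "(2::'a) \<noteq> 0" shows "jprod C (Em C k) (Em C k) = Em C k"
  using ex3[of k] assms
  apply (elim disjE)
  apply (simp_all only: mat_eq all3)
  apply (simp_all add: jprod_def msmul_def madd_def mmul_def Em_def half_one)
  done

lemma Off_H: assumes "X \<in> Hset C g" shows "Off C X l m \<in> Hset C g"
  unfolding H_char
proof (intro allI)
  fix i j
  have x: "X i j = csmul C (g j * inverse (g i)) (cconj C (X j i))" using assms(1) unfolding H_char by blast
  show "Off C X l m i j = csmul C (g j * inverse (g i)) (cconj C (Off C X l m j i))"
  proof (cases "(i = l \<and> j = m) \<or> (i = m \<and> j = l)")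
    case True
    have a: "Off C X l m i j = X i j" using True unfolding Off_def by simp
    have b: "Off C X l m j i = X j i" using True unfolding Off_def by auto
    show ?thesis unfolding a b by (rule x)
  next
    case False
    have a: "Off C X l m i j = czero C" using False unfolding Off_def by auto
    have b: "Off C X l m j i = czero C" using False unfolding Off_def by auto
    show ?thesis unfolding a b by simp
  qed
qed

lemma Off_shape: "shape C 0 (Off C X 0 1)" "shape C 0 (Off C X 0 2)" "shape C 1 (Off C X 1 2)"
  by (auto simp: shape_def Off_def)

lemma diag_H: assumes "X \<in> Hset C g" "\<forall>i. g i \<noteq> 0" "(2::'a) \<noteq> 0"
  shows "X k k = csmul C (re (X k k)) (cone C)"
proof -
  have h: "X k k = csmul C (g k * inverse (g k)) (cconj C (X k k))" using assms(1) unfolding H_char by blast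
  have one: "g k * inverse (g k) = 1" using assms(2) by simp
  have "X k k = csmul C 1 (cconj C (X k k))" using h by (simp only: one)
  hence "X k k = cconj C (X k k)" by (simp only: smul_one)
  thus ?thesis using conj_fix[OF assms(3)] by metis
qed

lemma decomp: assumes "X \<in> Hset C g" "\<forall>i. g i \<noteq> 0" "(2::'a) \<noteq> 0"
  shows "X = madd C (madd C (madd C (msmul C (re (X 0 0)) (Em C 0)) (msmul C (re (X 1 1)) (Em C 1)))
                  (msmul C (re (X 2 2)) (Em C 2)))
             (madd C (madd C (Off C X 0 1) (Off C X 0 2)) (Off C X 1 2))"
  using diag_H[OF assms, of 0, symmetric] diag_H[OF assms, of 1, symmetric] diag_H[OF assms, of 2, symmetric]
  apply (simp only: mat_eq all3)
  apply (simp add: madd_def msmul_def Em_def Off_def)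
  done

lemma jprod_zero: "jprod C (mzero C) X = mzero C"
  by (simp add: mat_eq jprod_def mzero_def msmul_def madd_def mmul_def)

lemma madd_zero: "madd C (mzero C) X = X" "madd C X (mzero C) = X"
  by (simp_all add: mat_eq mzero_def madd_def)

lemma msmul_zero: "msmul C r (mzero C) = mzero C"
  by (simp add: mat_eq mzero_def msmul_def)


lemma main_C:
  assumes two: "(2::'a) \<noteq> 0" and g: "\<forall>i. gamma i \<noteq> 0"
  shows "\<not> deriv_inv_values C gamma d"
proof
  assume dv: "deriv_inv_values C gamma d"
  let ?H = "Hset C gamma"
  have inH: "\<And>X. X \<in> ?H \<Longrightarrow> d X \<in> ?H"
    and add: "\<And>X Y. X \<in> ?H \<Longrightarrow> Y \<in> ?H \<Longrightarrow> d (madd C X Y) = madd C (d X) (d Y)"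
    and sm: "\<And>k X. X \<in> ?H \<Longrightarrow> d (msmul C k X) = msmul C k (d X)"
    and lb: "\<And>X Y. X \<in> ?H \<Longrightarrow> Y \<in> ?H \<Longrightarrow> d (jprod C X Y) = madd C (jprod C (d X) Y) (jprod C X (d Y))"
    and ex: "\<exists>X \<in> ?H. d X \<noteq> mzero C"
    and vals: "\<And>X. X \<in> ?H \<Longrightarrow> d X = mzero C \<or> jinvertible C gamma (d X)"
    using dv unfolding deriv_inv_values_def is_derivation_def by blast+
  have kill: "d X = mzero C" if "X \<in> ?H" "shape C k (d X)" for X k
  proof -
    { assume "jinvertible C gamma (d X)"
      then obtain y where "jprod C (d X) y = mone C" unfolding jinvertible_def by blast
      hence False using noninv that(2) by blast }
    thus ?thesis using vals[OF that(1)] by blast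
  qed
  have dE: "d (Em C k) = mzero C" for k
  proof -
    have E: "Em C k \<in> ?H" using Em_H g by blast
    let ?Z = "d (Em C k)"
    have "?Z = d (jprod C (Em C k) (Em C k))" using Em_idem[OF two] by simp
    also have "\<dots> = madd C (jprod C ?Z (Em C k)) (jprod C (Em C k) ?Z)" using lb E by blast
    also have "\<dots> = madd C (jprod C (Em C k) ?Z) (jprod C (Em C k) ?Z)" using jprod_comm by metis
    finally have "jprod C (Em C k) ?Z = msmul C (inverse 2) ?Z" using double_mat[OF two] by blast
    hence "shape C k ?Z" using peirce_iff[OF two] by blast
    thus ?thesis using kill E by blast
  qed
  have dO: "d Q = mzero C" if Q: "Q \<in> ?H" "shape C k Q" for Q k
  proof -
    have E: "Em C k \<in> ?H" using Em_H g by blast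
    have j: "jprod C (Em C k) Q = msmul C (inverse 2) Q" using peirce_iff[OF two] Q(2) by blast
    have "msmul C (inverse 2) (d Q) = d (msmul C (inverse 2) Q)" using sm Q(1) by simp
    also have "\<dots> = d (jprod C (Em C k) Q)" using j by simp
    also have "\<dots> = madd C (jprod C (d (Em C k)) Q) (jprod C (Em C k) (d Q))" using lb E Q(1) by blast
    also have "\<dots> = jprod C (Em C k) (d Q)" by (simp add: dE jprod_zero madd_zero)
    finally have "shape C k (d Q)" using peirce_iff[OF two] by metis
    thus ?thesis using kill Q(1) by blast
  qed
  have dD: "d (msmul C r (Em C k)) = mzero C" for r k
    using sm[of "Em C k" r] Em_H[OF g] dE msmul_zero by simp
  have all0: "d X = mzero C" if X: "X \<in> ?H" for X
  proof -
    let ?D0 = "msmul C (re (X 0 0)) (Em C 0)" and ?D1 = "msmul C (re (X 1 1)) (Em C 1)"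
      and ?D2 = "msmul C (re (X 2 2)) (Em C 2)"
      and ?O1 = "Off C X 0 1" and ?O2 = "Off C X 0 2" and ?O3 = "Off C X 1 2"
    have H: "?D0 \<in> ?H" "?D1 \<in> ?H" "?D2 \<in> ?H" "?O1 \<in> ?H" "?O2 \<in> ?H" "?O3 \<in> ?H"
      using msmul_H Em_H[OF g] Off_H X by blast+
    have z: "d ?D0 = mzero C" "d ?D1 = mzero C" "d ?D2 = mzero C"
        "d ?O1 = mzero C" "d ?O2 = mzero C" "d ?O3 = mzero C"
      using dD dO H Off_shape by blast+
    have "d X = d (madd C (madd C (madd C ?D0 ?D1) ?D2) (madd C (madd C ?O1 ?O2) ?O3))"
      using decomp[OF X g two] by simp
    also have "\<dots> = mzero C"
      using H z madd_H add madd_zero by simp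
    finally show ?thesis .
  qed
  show False using ex all0 by blast
qed

end

theorem lemma6:
  fixes mu1 mu2 mu3 :: "'a::field" and gamma :: "3 \<Rightarrow> 'a"
  assumes "(2::'a) \<noteq> 0" and "(3::'a) \<noteq> 0"
    and "mu1 \<noteq> 0" and "mu2 \<noteq> 0" and "mu3 \<noteq> 0"
    and "\<forall>i. gamma i \<noteq> 0"
  shows "\<not> (\<exists>d. deriv_inv_values (cayley_dickson mu1 mu2 mu3) gamma d)"
  using main_C[OF assms(1) assms(6)] by blast

end
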